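(* Let $n\ge2$, distinct real $a_1,\dots,a_n$, $F(a)=\sum_{k=0}^nA_ka^k=\prod_{i=1}^n(a-a_i)$, signs $\epsilon_i\in\{\pm1\}$, reals $\xi_i$, $\Delta_i=\epsilon_i(a-a_i)$, $x=\sum_i\xi_i\Delta_i^{-1/2}$ on an open interval $I\subset(0,\infty)$ where all $\Delta_i>0$ and $\dot x\ne0$. Let $H=\Pi^2+aP_y^2$, $\Pi=\frac a{\dot x}P_a$, and let $G,Q_1,Q_2,S_1,S_2$ be defined by $$G=\sum_{k=0}^nA_{n-k}H^{n-k}P_y^{2k},\ Q_1=\sum_{k=1}^n\tilde b_kH^{n-k}\Pi P_y^{2k-1},\ Q_2=\sum_{k=1}^n\tilde c_kH^{n-k}P_y^{2k},\ S_1=Q_1+yG,\ S_2=Q_2+yQ_1+\tfrac{y^2}2G,$$ with $\tilde b_k=(-1)^k\sum_i\frac{\xi_i}{\sqrt{\Delta_i}}\sigma^i_{k-1}$ and $\tilde c_k=\frac{(-1)^{k+1}}2\big(\sum_i\frac{\xi_i^2}{\Delta_i}\sigma^i_{k-1}+\sum_{i\ne j}\frac{\xi_i\xi_j}{\sqrt{\Delta_i\Delta_j}}(\sigma^{ij}_{k-1}+a\sigma^{ij}_{k-2})\big)$. Then $$S_1^2-2G\,S_2=A_n^2\sum_{k,l=1}^n\mathcal{Q}_{kl}\,H^{2n-k-l}P_y^{2(k+l)},\qquad \mathcal{Q}_{kl}=(-1)^{k+l+1}\sum_{i=1}^n\epsilon_i\xi_i^2\,\sigma^i_{k-1}\sig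ma^i_{l-1}.$$
   Context: Symmetric functions: for each $i$, $\sigma^i_m$ ($-1\le m\le n$) by $\prod_{l\neq i}(a-a_l)=\sum_{m=0}^{n-1}(-1)^m\sigma^i_ma^{n-1-m}$ with $\sigma^i_{-1}=\sigma^i_n=0$; for $i\ne j$, $\sigma^{ij}_m$ ($-2\le m\le n$) by $\prod_{l\ne i,j}(a-a_l)=\sum_{m=0}^{n-2}(-1)^m\sigma^{ij}_ma^{n-2-m}$ with $\sigma^{ij}_{-2}=\sigma^{ij}_{-1}=\sigma^{ij}_{n-1}=\sigma^{ij}_n=0$. (Here $A_n=1$.) *)

theory Defs
  imports "HOL-Analysis.Analysis" "HOL-Computational_Algebra.Polynomial"
begin

definition Acoef :: "(nat \<Rightarrow> real) \<Rightarrow> nat \<Rightarrow> nat \<Rightarrow> real" where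
  "Acoef al n k = coeff (\<Prod>i\<in>{1..n}. [:- al i, 1:]) k"

text \<open>sigma^i_m: prod_{l<>i}(a-a_l) = sum_{m=0}^{n-1} (-1)^m sigma^i_m a^{n-1-m};
  zero outside 0..n-1 (in particular sigma^i_{-1} = sigma^i_n = 0).\<close>
definition sigma1 :: "(nat \<Rightarrow> real) \<Rightarrow> nat \<Rightarrow> nat \<Rightarrow> int \<Rightarrow> real" where
  "sigma1 al n i m =
     (if 0 \<le> m \<and> m \<le> int n - 1
      then (-1) ^ nat m * coeff (\<Prod>l\<in>{1..n} - {i}. [:- al l, 1:]) (n - 1 - nat m)
      else 0)"

text \<open>sigma^{ij}_m: prod_{l<>i,j}(a-a_l) = sum_{m=0}^{n-2} (-1)^m sigma^{ij}_m a^{n-2-m};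
  zero outside 0..n-2.\<close>
definition sigma2 :: "(nat \<Rightarrow> real) \<Rightarrow> nat \<Rightarrow> nat \<Rightarrow> nat \<Rightarrow> int \<Rightarrow> real" where
  "sigma2 al n i j m =
     (if 0 \<le> m \<and> m \<le> int n - 2
      then (-1) ^ nat m * coeff (\<Prod>l\<in>{1..n} - {i, j}. [:- al l, 1:]) (n - 2 - nat m)
      else 0)"

end

theory Submission imports Defs begin

definition hom :: "nat \<Rightarrow> real poly \<Rightarrow> real \<Rightarrow> real \<Rightarrow> real" where
  "hom d p u v = (\<Sum>m=0..d. coeff p m * u^m * v^(d-m))"

lemma lin_deg: "finite S \<Longrightarrow> degree (\<Prod>l\<in>S. [:- c l, 1::real:]) = card S"
  by (subst degree_prod_eq_sum_degree) auto

lemma lin_lead: "lead_coeff (\<Prod>l\<in>S. [:- c l, 1::real:]) = 1"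
  by (simp add: lead_coeff_prod)

lemma hom_prod:
  assumes "finite S"
  shows "hom (card S) (\<Prod>l\<in>S. [:- c l, 1:]) u v = (\<Prod>l\<in>S. u - c l * v)"
proof (cases "v = 0")
  case True
  let ?p = "\<Prod>l\<in>S. [:- c l, 1::real:]"
  have "hom (card S) ?p u v = (\<Sum>m=0..card S. if m = card S then coeff ?p m * u^m else 0)"
    unfolding hom_def using True by (intro sum.cong) auto
  also have "\<dots> = coeff ?p (card S) * u ^ card S" by simp
  also have "\<dots> = u ^ card S" using lin_lead[of c S] lin_deg[OF assms, of c] by simp
  finally show ?thesis using True by simp
next
  case False
  let ?p = "\<Prod>l\<in>S. [:- c l, 1::real:]"
  have "hom (card S) ?p u v = v ^ card S * (\<Sum>m=0..card S. coeff ?p m * (u/v)^m)"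
    unfolding hom_def sum_distrib_left
    using False by (intro sum.cong) (auto simp: power_divide power_diff field_simps)
  also have "\<dots> = v ^ card S * poly ?p (u/v)"
    by (simp add: poly_altdef lin_deg[OF assms] atLeast0AtMost)
  also have "\<dots> = (\<Prod>l\<in>S. v * (u/v - c l))"
    by (simp add: poly_prod prod.distrib assms)
  also have "\<dots> = (\<Prod>l\<in>S. u - c l * v)"
    using False by (intro prod.cong) (auto simp: field_simps)
  finally show ?thesis .
qed

lemma hom_rev: "hom d p u v = (\<Sum>k<Suc d. coeff p (d-k) * u^(d-k) * v^k)"
proof -
  have "hom d p u v = (\<Sum>m<Suc d. coeff p m * u^m * v^(d-m))"
    unfolding hom_def by (simp add: atLeast0AtMost lessThan_Suc_atMost)
  also have "\<dots> = (\<Sum>k<Suc d. coeff p (Suc d - Suc k) * u^(Suc d - Suc k) * v^(d - (Suc d - Suc k)))"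
    by (rule sum.nat_diff_reindex[symmetric])
  also have "\<dots> = (\<Sum>k<Suc d. coeff p (d-k) * u^(d-k) * v^k)"
    by (intro sum.cong) auto
  finally show ?thesis .
qed


lemma sum1_shift: "(\<Sum>k=1..Suc m. f k) = (\<Sum>k<Suc m. f (Suc k))"
  by (simp add: sum.shift_bounds_cl_Suc_ivl[where m=0, simplified] atLeast0AtMost lessThan_Suc_atMost)

lemma sig1_sum:
  assumes i: "i \<in> {1..n}"
  shows "(\<Sum>k=1..n. (-1::real)^k * sigma1 al n i (int k - 1) * u^(n-k) * v^(k-1))
       = - (\<Prod>l\<in>{1..n}-{i}. u - al l * v)"
proof -
  obtain m where n: "n = Suc m" using i by (cases n) auto
  let ?p = "\<Prod>l\<in>{1..n}-{i}. [:- al l, 1::real:]"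
  have c: "card ({1..n}-{i}) = m" using i n by simp
  have "(\<Sum>k=1..n. (-1::real)^k * sigma1 al n i (int k - 1) * u^(n-k) * v^(k-1))
      = (\<Sum>k<Suc m. (-1::real)^(Suc k) * sigma1 al n i (int (Suc k) - 1) * u^(n - Suc k) * v^k)"
    unfolding n sum1_shift by simp
  also have "\<dots> = (\<Sum>k<Suc m. - (coeff ?p (m-k) * u^(m-k) * v^k))"
    by (intro sum.cong refl) (auto simp: sigma1_def n nat_diff_distrib)
  also have "\<dots> = - hom m ?p u v" by (simp add: hom_rev sum_negf)
  also have "\<dots> = - (\<Prod>l\<in>{1..n}-{i}. u - al l * v)"
    using hom_prod[of "{1..n}-{i}" al u v] c by simp
  finally show ?thesis .
qed

lemma sig2_sum_a:
  assumes i: "i \<in> {1..n}" and j: "j \<in> {1..n}" and ij: "i \<noteq> j"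
  shows "(\<Sum>k=1..n. (-1::real)^(k+1) * sigma2 al n i j (int k - 1) * u^(n-k) * v^k)
       = u * v * (\<Prod>l\<in>{1..n}-{i,j}. u - al l * v)"
proof -
  have "n \<ge> 2" using i j ij by auto
  then obtain m where n: "n = Suc (Suc m)" by (metis add_2_eq_Suc le_Suc_ex)
  let ?p = "\<Prod>l\<in>{1..n}-{i,j}. [:- al l, 1::real:]"
  have c: "card ({1..n}-{i,j}) = m" using i j ij n by (simp add: card_Diff_subset)
  have "(\<Sum>k=1..n. (-1::real)^(k+1) * sigma2 al n i j (int k - 1) * u^(n-k) * v^k)
      = (\<Sum>k<Suc (Suc m). (-1::real)^(Suc k+1) * sigma2 al n i j (int (Suc k) - 1) * u^(n - Suc k) * v^(Suc k))"
    unfolding n by (rule sum1_shift)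
  also have "\<dots> = (\<Sum>k<Suc m. (-1::real)^(Suc k+1) * sigma2 al n i j (int (Suc k) - 1) * u^(n - Suc k) * v^(Suc k))"
    by (simp add: sigma2_def n)
  also have "\<dots> = (\<Sum>k<Suc m. u * v * (coeff ?p (m-k) * u^(m-k) * v^k))"
    by (intro sum.cong refl) (auto simp: sigma2_def n nat_diff_distrib Suc_diff_le)
  also have "\<dots> = u * v * hom m ?p u v" by (simp add: hom_rev sum_distrib_left del: sum.lessThan_Suc)
  also have "\<dots> = u * v * (\<Prod>l\<in>{1..n}-{i,j}. u - al l * v)"
    using hom_prod[of "{1..n}-{i,j}" al u v] c by simp
  finally show ?thesis .
qed

lemma sig2_sum_b:
  assumes i: "i \<in> {1..n}" and j: "j \<in> {1..n}" and ij: "i \<noteq> j"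
  shows "(\<Sum>k=1..n. (-1::real)^(k+1) * sigma2 al n i j (int k - 2) * u^(n-k) * v^k)
       = (- (v^2)) * (\<Prod>l\<in>{1..n}-{i,j}. u - al l * v)"
proof -
  have "n \<ge> 2" using i j ij by auto
  then obtain m where n: "n = Suc (Suc m)" by (metis add_2_eq_Suc le_Suc_ex)
  let ?p = "\<Prod>l\<in>{1..n}-{i,j}. [:- al l, 1::real:]"
  have c: "card ({1..n}-{i,j}) = m" using i j ij n by (simp add: card_Diff_subset)
  have "(\<Sum>k=1..n. (-1::real)^(k+1) * sigma2 al n i j (int k - 2) * u^(n-k) * v^k)
      = (\<Sum>k<Suc (Suc m). (-1::real)^(Suc k+1) * sigma2 al n i j (int (Suc k) - 2) * u^(n - Suc k) * v^(Suc k))"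
    unfolding n by (rule sum1_shift)
  also have "\<dots> = (\<Sum>k<Suc m. (-1::real)^(Suc (Suc k)+1) * sigma2 al n i j (int (Suc (Suc k)) - 2) * u^(n - Suc (Suc k)) * v^(Suc (Suc k)))"
    by (subst sum.lessThan_Suc_shift) (simp add: sigma2_def)
  also have "\<dots> = (\<Sum>k<Suc m. (- (v^2)) * (coeff ?p (m-k) * u^(m-k) * v^k))"
    by (intro sum.cong refl) (auto simp: sigma2_def n nat_diff_distrib power2_eq_square)
  also have "\<dots> = (- (v^2)) * hom m ?p u v" by (simp add: hom_rev sum_distrib_left del: sum.lessThan_Suc)
  also have "\<dots> = (- (v^2)) * (\<Prod>l\<in>{1..n}-{i,j}. u - al l * v)"
    using hom_prod[of "{1..n}-{i,j}" al u v] c by simp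
  finally show ?thesis .
qed

lemma G_sum:
  "(\<Sum>k=0..n. Acoef al n (n - k) * u^(n-k) * v^k) = (\<Prod>l\<in>{1..n}. u - al l * v)"
proof -
  have "(\<Sum>k=0..n. Acoef al n (n - k) * u^(n-k) * v^k) = hom n (\<Prod>l\<in>{1..n}. [:- al l, 1:]) u v"
    by (simp add: hom_rev Acoef_def atLeast0AtMost lessThan_Suc_atMost)
  also have "\<dots> = (\<Prod>l\<in>{1..n}. u - al l * v)" using hom_prod[of "{1..n}" al u v] by simp
  finally show ?thesis .
qed

lemma Acoef_n: "Acoef al n n = 1"
  using lin_lead[of al "{1..n}"] lin_deg[of "{1..n}" al] by (simp add: Acoef_def)


lemma pow_odd: "k \<ge> 1 \<Longrightarrow> (Py::real)^(2*k-1) = Py * (Py^2)^(k-1)"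
proof -
  assume "k \<ge> 1"
  then have "2*k-1 = Suc (2*(k-1))" by simp
  then show ?thesis by (simp add: power_mult)
qed

lemma Q1_lem:
  "(\<Sum>k=1..n. ((-1::real)^k * (\<Sum>i=1..n. b i * sigma1 al n i (int k - 1))) * u^(n-k) * Pv * Py^(2*k-1))
   = - (Pv * Py * (\<Sum>i=1..n. b i * (\<Prod>l\<in>{1..n}-{i}. u - al l * Py^2)))"
proof -
  let ?v = "Py^2"
  have "(\<Sum>k=1..n. ((-1::real)^k * (\<Sum>i=1..n. b i * sigma1 al n i (int k - 1))) * u^(n-k) * Pv * Py^(2*k-1))
     = (\<Sum>k=1..n. \<Sum>i=1..n. Pv * Py * b i * ((-1::real)^k * sigma1 al n i (int k - 1) * u^(n-k) * ?v^(k-1)))"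
  proof (intro sum.cong refl)
    fix k assume "k \<in> {1..n}"
    then have "Py^(2*k-1) = Py * ?v^(k-1)" by (intro pow_odd) auto
    then show "((-1::real)^k * (\<Sum>i=1..n. b i * sigma1 al n i (int k - 1))) * u^(n-k) * Pv * Py^(2*k-1)
      = (\<Sum>i=1..n. Pv * Py * b i * ((-1::real)^k * sigma1 al n i (int k - 1) * u^(n-k) * ?v^(k-1)))"
      by (simp add: sum_distrib_left sum_distrib_right mult_ac)
  qed
  also have "\<dots> = (\<Sum>i=1..n. \<Sum>k=1..n. Pv * Py * b i * ((-1::real)^k * sigma1 al n i (int k - 1) * u^(n-k) * ?v^(k-1)))"
    by (rule sum.swap)
  also have "\<dots> = (\<Sum>i=1..n. Pv * Py * b i * (\<Sum>k=1..n. (-1::real)^k * sigma1 al n i (int k - 1) * u^(n-k) * ?v^(k-1)))"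
    by (simp add: sum_distrib_left)
  also have "\<dots> = (\<Sum>i=1..n. Pv * Py * b i * (- (\<Prod>l\<in>{1..n}-{i}. u - al l * ?v)))"
  proof (intro sum.cong refl)
    fix i assume "i \<in> {1..n}"
    then show "Pv * Py * b i * (\<Sum>k=1..n. (-1::real)^k * sigma1 al n i (int k - 1) * u^(n-k) * ?v^(k-1))
      = Pv * Py * b i * (- (\<Prod>l\<in>{1..n}-{i}. u - al l * ?v))"
      using sig1_sum[of i n al u ?v] by simp
  qed
  also have "\<dots> = - (Pv * Py * (\<Sum>i=1..n. b i * (\<Prod>l\<in>{1..n}-{i}. u - al l * Py^2)))"
    by (simp add: sum_distrib_left sum_negf mult_ac)
  finally show ?thesis .
qed

lemma sig1_sum2:
  assumes i: "i \<in> {1..n}"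
  shows "(\<Sum>k=1..n. (-1::real)^k * sigma1 al n i (int k - 1) * u^(n-k) * v^k)
       = - v * (\<Prod>l\<in>{1..n}-{i}. u - al l * v)"
proof -
  have "(\<Sum>k=1..n. (-1::real)^k * sigma1 al n i (int k - 1) * u^(n-k) * v^k)
     = v * (\<Sum>k=1..n. (-1::real)^k * sigma1 al n i (int k - 1) * u^(n-k) * v^(k-1))"
    unfolding sum_distrib_left
  proof (intro sum.cong refl)
    fix k assume "k \<in> {1..n}"
    then have "v^k = v * v^(k-1)" by (cases k) auto
    then show "(-1::real)^k * sigma1 al n i (int k - 1) * u^(n-k) * v^k
       = v * ((-1::real)^k * sigma1 al n i (int k - 1) * u^(n-k) * v^(k-1))" by simp
  qed
  then show ?thesis using sig1_sum[OF i] by simp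
qed

lemma Q2_lem:
  "(\<Sum>k=1..n. ((-1::real)^(k+1) / 2 *
               ((\<Sum>i=1..n. d i * sigma1 al n i (int k - 1)) +
                (\<Sum>i\<in>{1..n}. \<Sum>j\<in>{1..n} - {i}.
                   c i j * (sigma2 al n i j (int k - 1) + a * sigma2 al n i j (int k - 2))))) * u^(n-k) * Py^(2*k))
   = 1/2 * (Py^2 * (\<Sum>i=1..n. d i * (\<Prod>l\<in>{1..n}-{i}. u - al l * Py^2))
       + (u * Py^2 - a * (Py^2)^2) * (\<Sum>i\<in>{1..n}. \<Sum>j\<in>{1..n} - {i}. c i j * (\<Prod>l\<in>{1..n}-{i,j}. u - al l * Py^2)))"
  (is "?L = ?R")
proof -
  let ?v = "Py^2"
  define T1 where "T1 i k = (-1::real)^(k+1) * sigma1 al n i (int k - 1) * u^(n-k) * ?v^k" for i k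
  define T2 where "T2 i j k = (-1::real)^(k+1) * sigma2 al n i j (int k - 1) * u^(n-k) * ?v^k" for i j k
  define T3 where "T3 i j k = (-1::real)^(k+1) * sigma2 al n i j (int k - 2) * u^(n-k) * ?v^k" for i j k
  have e: "\<And>k. Py^(2*k) = ?v^k" by (simp add: power_mult)
  have "?L = (\<Sum>k=1..n. 1/2 * ((\<Sum>i=1..n. d i * T1 i k) +
         (\<Sum>i\<in>{1..n}. \<Sum>j\<in>{1..n} - {i}. c i j * (T2 i j k + a * T3 i j k))))"
    unfolding e by (intro sum.cong refl)
       (simp add: T1_def T2_def T3_def sum_distrib_left sum_distrib_right algebra_simps)
  also have "\<dots> = 1/2 * ((\<Sum>i=1..n. d i * (\<Sum>k=1..n. T1 i k)) +
         (\<Sum>i\<in>{1..n}. \<Sum>j\<in>{1..n} - {i}. c i j * ((\<Sum>k=1..n. T2 i j k) + a * (\<Sum>k=1..n. T3 i j k))))"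
  proof -
    have A: "(\<Sum>k=1..n. \<Sum>i=1..n. d i * T1 i k) = (\<Sum>i=1..n. d i * (\<Sum>k=1..n. T1 i k))"
      by (subst sum.swap) (simp add: sum_distrib_left)
    have B: "(\<Sum>k=1..n. \<Sum>i\<in>{1..n}. \<Sum>j\<in>{1..n} - {i}. c i j * (T2 i j k + a * T3 i j k))
       = (\<Sum>i\<in>{1..n}. \<Sum>j\<in>{1..n} - {i}. c i j * ((\<Sum>k=1..n. T2 i j k) + a * (\<Sum>k=1..n. T3 i j k)))"
      apply (subst sum.swap)
      apply (rule sum.cong[OF refl])
      apply (subst sum.swap)
      apply (rule sum.cong[OF refl])
      apply (simp add: sum_distrib_left sum.distrib distrib_left)
      done
    show ?thesis
      by (simp only: sum_distrib_left[symmetric] sum.distrib A B)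
  qed
  also have "\<dots> = 1/2 * ((\<Sum>i=1..n. d i * (?v * (\<Prod>l\<in>{1..n}-{i}. u - al l * ?v))) +
         (\<Sum>i\<in>{1..n}. \<Sum>j\<in>{1..n} - {i}. c i j * (u * ?v * (\<Prod>l\<in>{1..n}-{i,j}. u - al l * ?v)
              + a * (- (?v^2) * (\<Prod>l\<in>{1..n}-{i,j}. u - al l * ?v)))))"
  proof -
    have "(\<Sum>k=1..n. T1 i k) = ?v * (\<Prod>l\<in>{1..n}-{i}. u - al l * ?v)" if "i \<in> {1..n}" for i
      using sig1_sum2[OF that, of al u ?v] unfolding T1_def
      by (simp add: sum_negf)
    moreover have "(\<Sum>k=1..n. T2 i j k) = u * ?v * (\<Prod>l\<in>{1..n}-{i,j}. u - al l * ?v)"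
      if "i \<in> {1..n}" "j \<in> {1..n}-{i}" for i j
      using sig2_sum_a[of i n j al u ?v] that unfolding T2_def by auto
    moreover have "(\<Sum>k=1..n. T3 i j k) = - (?v^2) * (\<Prod>l\<in>{1..n}-{i,j}. u - al l * ?v)"
      if "i \<in> {1..n}" "j \<in> {1..n}-{i}" for i j
      using sig2_sum_b[of i n j al u ?v] that unfolding T3_def by auto
    ultimately show ?thesis by (intro arg_cong2[where f="\<lambda>x y. 1/2*(x+y)"] sum.cong refl) auto
  qed
  also have "\<dots> = ?R" by (simp add: sum_distrib_left algebra_simps)
  finally show ?thesis .
qed


lemma RHS_lem:
  "(\<Sum>k=1..n. \<Sum>l=1..n. (-1::real)^(k+l+1) *
      (\<Sum>i=1..n. e i * sigma1 al n i (int k - 1) * sigma1 al n i (int l - 1)) * u^(2*n-k-l) * Py^(2*(k+l)))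
   = - ((Py^2)^2 * (\<Sum>i=1..n. e i * (\<Prod>l\<in>{1..n}-{i}. u - al l * Py^2)^2))"
proof -
  let ?v = "Py^2"
  define X where "X i k = (-1::real)^k * sigma1 al n i (int k - 1) * u^(n-k) * ?v^k" for i k
  have "(\<Sum>k=1..n. \<Sum>l=1..n. (-1::real)^(k+l+1) *
      (\<Sum>i=1..n. e i * sigma1 al n i (int k - 1) * sigma1 al n i (int l - 1)) * u^(2*n-k-l) * Py^(2*(k+l)))
    = (\<Sum>k=1..n. \<Sum>l=1..n. \<Sum>i=1..n. - (e i * X i k * X i l))"
  proof (intro sum.cong refl)
    fix k l assume k: "k \<in> {1..n}" and l: "l \<in> {1..n}"
    have "2*n-k-l = (n-k)+(n-l)" using k l by auto
    then have u: "u^(2*n-k-l) = u^(n-k) * u^(n-l)" by (simp only: power_add)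
    have p: "Py^(2*(k+l)) = ?v^k * ?v^l" by (simp add: power_mult power_add)
    have s: "(-1::real)^(k+l+1) = - ((-1)^k * (-1)^l)" by (simp add: power_add)
    show "(-1::real)^(k+l+1) *
      (\<Sum>i=1..n. e i * sigma1 al n i (int k - 1) * sigma1 al n i (int l - 1)) * u^(2*n-k-l) * Py^(2*(k+l))
      = (\<Sum>i=1..n. - (e i * X i k * X i l))"
      unfolding u p s X_def by (simp add: sum_distrib_left sum_distrib_right sum_negf mult_ac)
  qed
  also have "\<dots> = (\<Sum>i=1..n. - (e i * ((\<Sum>k=1..n. X i k) * (\<Sum>l=1..n. X i l))))"
  proof -
    have "(\<Sum>k=1..n. \<Sum>l=1..n. \<Sum>i=1..n. - (e i * X i k * X i l))
        = (\<Sum>k=1..n. \<Sum>i=1..n. \<Sum>l=1..n. - (e i * X i k * X i l))"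
      by (rule sum.cong[OF refl], rule sum.swap)
    also have "\<dots> = (\<Sum>i=1..n. \<Sum>k=1..n. \<Sum>l=1..n. - (e i * X i k * X i l))"
      by (rule sum.swap)
    also have "\<dots> = (\<Sum>i=1..n. - (e i * ((\<Sum>k=1..n. X i k) * (\<Sum>l=1..n. X i l))))"
      by (simp add: sum_product sum_distrib_left sum_negf mult_ac)
    finally show ?thesis .
  qed
  also have "\<dots> = (\<Sum>i=1..n. - (e i * (?v * (\<Prod>l\<in>{1..n}-{i}. u - al l * ?v))^2))"
  proof (intro sum.cong refl)
    fix i assume "i \<in> {1..n}"
    then have "(\<Sum>k=1..n. X i k) = - ?v * (\<Prod>l\<in>{1..n}-{i}. u - al l * ?v)"
      unfolding X_def by (rule sig1_sum2)
    then show "- (e i * ((\<Sum>k=1..n. X i k) * (\<Sum>l=1..n. X i l))) =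
       - (e i * (?v * (\<Prod>l\<in>{1..n}-{i}. u - al l * ?v))^2)"
      by (simp add: power2_eq_square)
  qed
  also have "\<dots> = - ((Py^2)^2 * (\<Sum>i=1..n. e i * (\<Prod>l\<in>{1..n}-{i}. u - al l * Py^2)^2))"
    by (simp add: sum_distrib_left sum_negf power_mult_distrib mult_ac)
  finally show ?thesis .
qed

lemma final_alg:
  fixes S :: "nat set" and P w e :: "nat \<Rightarrow> real" and Qp :: "nat \<Rightarrow> nat \<Rightarrow> real"
  assumes fin: "finite S"
    and hG: "\<forall>i\<in>S. Gp = (u - al i * v) * P i"
    and hP: "\<forall>i\<in>S. \<forall>j\<in>S-{i}. P i * P j = Gp * Qp i j"
    and hPI: "Pv^2 = u - a* v" and hv: "v = Py^2"
    and he: "\<forall>i\<in>S. w i ^2 * (al i - a) = - e i"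
  shows "(Pv * Py*(\<Sum>i\<in>S. w i * P i))^2
     - Gp*(v * (\<Sum>i\<in>S. w i^2 * P i) + (u* v - a* v^2) * (\<Sum>i\<in>S. \<Sum>j\<in>S-{i}. w i * w j * Qp i j))
     = - (v^2 * (\<Sum>i\<in>S. e i * P i ^2))"
proof -
  define X where "X = (\<Sum>i\<in>S. w i^2 * P i^2)"
  define Y where "Y = (\<Sum>i\<in>S. \<Sum>j\<in>S-{i}. w i * w j * Qp i j)"
  define Z where "Z = (\<Sum>i\<in>S. w i^2 * P i)"
  have sq: "(\<Sum>i\<in>S. w i * P i)^2 = X + Gp * Y"
  proof -
    have "(\<Sum>i\<in>S. w i * P i)^2 = (\<Sum>i\<in>S. \<Sum>j\<in>S. w i * P i * (w j * P j))"
      by (simp add: power2_eq_square sum_product)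
    also have "\<dots> = (\<Sum>i\<in>S. w i^2 * P i^2 + (\<Sum>j\<in>S-{i}. w i * P i * (w j * P j)))"
      using fin by (intro sum.cong refl) (simp add: sum.remove power2_eq_square mult_ac)
    also have "\<dots> = (\<Sum>i\<in>S. w i^2 * P i^2 + Gp * (\<Sum>j\<in>S-{i}. w i * w j * Qp i j))"
    proof (intro sum.cong refl arg_cong2[where f="(+)"])
      fix i assume i: "i \<in> S"
      show "(\<Sum>j\<in>S-{i}. w i * P i * (w j * P j)) = Gp * (\<Sum>j\<in>S-{i}. w i * w j * Qp i j)"
        unfolding sum_distrib_left
      proof (intro sum.cong refl)
        fix j assume "j \<in> S - {i}"
        then have "P i * P j = Gp * Qp i j" using hP i by auto
        then show "w i * P i * (w j * P j) = Gp * (w i * w j * Qp i j)"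
          by (metis (no_types, opaque_lifting) mult.assoc mult.left_commute)
      qed
    qed
    also have "\<dots> = X + Gp * Y" unfolding X_def Y_def by (simp add: sum.distrib sum_distrib_left)
    finally show ?thesis .
  qed
  have "(Pv * Py*(\<Sum>i\<in>S. w i * P i))^2 = (u - a* v) * v * (X + Gp*Y)"
    by (simp add: power_mult_distrib sq hPI hv)
  then have "(Pv * Py*(\<Sum>i\<in>S. w i * P i))^2
     - Gp*(v * (\<Sum>i\<in>S. w i^2 * P i) + (u* v - a* v^2) * (\<Sum>i\<in>S. \<Sum>j\<in>S-{i}. w i * w j * Qp i j))
     = v * ((u - a* v) * X - Gp * Z)"
    unfolding Y_def[symmetric] Z_def[symmetric] by (simp add: algebra_simps power2_eq_square)
  also have "(u - a* v) * X - Gp * Z = (\<Sum>i\<in>S. w i^2 * P i * ((u - a* v) * P i - Gp))"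
    unfolding X_def Z_def by (simp add: sum_distrib_left sum_subtractf[symmetric] algebra_simps power2_eq_square)
  also have "\<dots> = (\<Sum>i\<in>S. - (v * (e i * P i^2)))"
  proof (intro sum.cong refl)
    fix i assume i: "i \<in> S"
    have "(u - a* v) * P i - Gp = (al i - a) * v * P i" using hG i by (simp add: algebra_simps)
    then have "w i^2 * P i * ((u - a* v) * P i - Gp) = (w i^2 * (al i - a)) * v * P i^2"
      by (simp add: power2_eq_square)
    also have "\<dots> = - (v * (e i * P i^2))" using he i by simp
    finally show "w i^2 * P i * ((u - a* v) * P i - Gp) = - (v * (e i * P i^2))" .
  qed
  finally show ?thesis by (simp add: sum_negf sum_distrib_left power2_eq_square mult_ac)
qed


theorem proposition12:
  fixes n :: nat and al \<epsilon> \<xi> :: "nat \<Rightarrow> real" and I :: "real set"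
    and \<Delta> :: "nat \<Rightarrow> real \<Rightarrow> real" and x :: "real \<Rightarrow> real"
    and a y Pa Py :: real
  assumes "n \<ge> 2"
    and "inj_on al {1..n}"
    and "\<forall>i\<in>{1..n}. \<epsilon> i = 1 \<or> \<epsilon> i = -1"
    and "open I" and "is_interval I" and "I \<subseteq> {0<..}"
    and "\<forall>i b. \<Delta> i b = \<epsilon> i * (b - al i)"
    and "\<forall>b. x b = (\<Sum>i=1..n. \<xi> i * \<Delta> i b powr (-1/2))"
    and "\<forall>b\<in>I. \<forall>i\<in>{1..n}. \<Delta> i b > 0"
    and "\<forall>b\<in>I. deriv x b \<noteq> 0"
    and "a \<in> I"
  shows
   "let Pi = a / deriv x a * Pa;
        H = Pi^2 + a * Py^2;
        bt = (\<lambda>k::nat. (-1::real)^k *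
               (\<Sum>i=1..n. \<xi> i / sqrt (\<Delta> i a) * sigma1 al n i (int k - 1)));
        ct = (\<lambda>k::nat. (-1::real)^(k+1) / 2 *
               ((\<Sum>i=1..n. \<xi> i ^ 2 / \<Delta> i a * sigma1 al n i (int k - 1)) +
                (\<Sum>i\<in>{1..n}. \<Sum>j\<in>{1..n} - {i}.
                   \<xi> i * \<xi> j / sqrt (\<Delta> i a * \<Delta> j a) *
                   (sigma2 al n i j (int k - 1) + a * sigma2 al n i j (int k - 2)))));
        G = (\<Sum>k=0..n. Acoef al n (n - k) * H^(n - k) * Py^(2*k));
        Q1 = (\<Sum>k=1..n. bt k * H^(n - k) * Pi * Py^(2*k - 1));
        Q2 = (\<Sum>k=1..n. ct k * H^(n - k) * Py^(2*k));
        S1 = Q1 + y * G;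
        S2 = Q2 + y * Q1 + y^2 / 2 * G;
        QQ = (\<lambda>k l::nat. (-1::real)^(k+l+1) *
               (\<Sum>i=1..n. \<epsilon> i * \<xi> i ^ 2 * sigma1 al n i (int k - 1) * sigma1 al n i (int l - 1)))
    in S1^2 - 2 * G * S2 =
       (Acoef al n n)^2 * (\<Sum>k=1..n. \<Sum>l=1..n. QQ k l * H^(2*n - k - l) * Py^(2*(k+l)))"
proof -
  note eps = assms(3) and Dd = assms(7)
  have Dpos: "\<forall>i\<in>{1..n}. \<Delta> i a > 0" using assms(9) assms(11) by blast
  define Pv where "Pv = a / deriv x a * Pa"
  define H where "H = Pv^2 + a * Py^2"
  define bt where "bt = (\<lambda>k::nat. (-1::real)^k *
               (\<Sum>i=1..n. \<xi> i / sqrt (\<Delta> i a) * sigma1 al n i (int k - 1)))"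
  define ct where "ct = (\<lambda>k::nat. (-1::real)^(k+1) / 2 *
               ((\<Sum>i=1..n. \<xi> i ^ 2 / \<Delta> i a * sigma1 al n i (int k - 1)) +
                (\<Sum>i\<in>{1..n}. \<Sum>j\<in>{1..n} - {i}.
                   \<xi> i * \<xi> j / sqrt (\<Delta> i a * \<Delta> j a) *
                   (sigma2 al n i j (int k - 1) + a * sigma2 al n i j (int k - 2)))))"
  define G where "G = (\<Sum>k=0..n. Acoef al n (n - k) * H^(n - k) * Py^(2*k))"
  define Q1 where "Q1 = (\<Sum>k=1..n. bt k * H^(n - k) * Pv * Py^(2*k - 1))"
  define Q2 where "Q2 = (\<Sum>k=1..n. ct k * H^(n - k) * Py^(2*k))"
  define S1 where "S1 = Q1 + y * G"
  define S2 where "S2 = Q2 + y * Q1 + y^2 / 2 * G"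
  define QQ where "QQ = (\<lambda>k l::nat. (-1::real)^(k+l+1) *
               (\<Sum>i=1..n. \<epsilon> i * \<xi> i ^ 2 * sigma1 al n i (int k - 1) * sigma1 al n i (int l - 1)))"
  define v where "v = Py^2"
  define P where "P i = (\<Prod>l\<in>{1..n}-{i}. H - al l * v)" for i
  define Qp where "Qp i j = (\<Prod>l\<in>{1..n}-{i,j}. H - al l * v)" for i j
  define Gp where "Gp = (\<Prod>l\<in>{1..n}. H - al l * v)"
  define w where "w i = \<xi> i / sqrt (\<Delta> i a)" for i
  define e where "e i = \<epsilon> i * \<xi> i ^ 2" for i
  have hGe: "G = Gp"
  proof -
    have "G = (\<Sum>k=0..n. Acoef al n (n - k) * H^(n - k) * v^k)"
      unfolding G_def v_def by (simp add: power_mult)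
    then show ?thesis unfolding Gp_def by (simp add: G_sum)
  qed
  have hQ1: "Q1 = - (Pv * Py * (\<Sum>i=1..n. w i * P i))"
    unfolding Q1_def bt_def P_def v_def w_def by (rule Q1_lem)
  have hQ2: "Q2 = 1/2 * (v * (\<Sum>i=1..n. \<xi> i ^ 2 / \<Delta> i a * P i)
       + (H * v - a * v^2) * (\<Sum>i\<in>{1..n}. \<Sum>j\<in>{1..n} - {i}. \<xi> i * \<xi> j / sqrt (\<Delta> i a * \<Delta> j a) * Qp i j))"
    unfolding Q2_def ct_def P_def Qp_def v_def by (rule Q2_lem)
  have hR: "(\<Sum>k=1..n. \<Sum>l=1..n. QQ k l * H^(2*n - k - l) * Py^(2*(k+l)))
      = - (v^2 * (\<Sum>i=1..n. e i * P i ^ 2))"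
    unfolding QQ_def e_def P_def v_def by (rule RHS_lem)
  have hA: "Acoef al n n = 1" by (rule Acoef_n)
  have w2: "w i ^ 2 = \<xi> i ^ 2 / \<Delta> i a" if "i \<in> {1..n}" for i
  proof -
    have "\<Delta> i a > 0" using Dpos that by auto
    then show ?thesis by (simp add: w_def power_divide)
  qed
  have ww: "w i * w j = \<xi> i * \<xi> j / sqrt (\<Delta> i a * \<Delta> j a)" for i j
    by (simp add: w_def real_sqrt_mult)
  have fa: "(Pv*Py*(\<Sum>i\<in>{1..n}. w i * P i))^2
     - Gp*(v * (\<Sum>i\<in>{1..n}. w i^2 * P i) + (H * v - a * v^2) * (\<Sum>i\<in>{1..n}. \<Sum>j\<in>{1..n}-{i}. w i * w j * Qp i j))
     = - (v^2 * (\<Sum>i\<in>{1..n}. e i * P i ^2))"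
  proof (rule final_alg)
    have e3: "Gp = (H - al i * v) * P i" if i: "i \<in> {1..n}" for i
      unfolding Gp_def P_def by (rule prod.remove) (use i in auto)
    then show "\<forall>i\<in>{1..n}. Gp = (H - al i * v) * P i" by blast
    show "\<forall>i\<in>{1..n}. \<forall>j\<in>{1..n}-{i}. P i * P j = Gp * Qp i j"
    proof (intro ballI)
      fix i j assume i: "i \<in> {1..n}" and j: "j \<in> {1..n}-{i}"
      have e1: "P i = (H - al j * v) * Qp i j"
      proof -
        have st: "{1..n}-{i}-{j} = {1..n}-{i,j}" by auto
        show ?thesis unfolding P_def Qp_def st[symmetric] by (rule prod.remove) (use j in auto)
      qed
      have e2: "P j = (H - al i * v) * Qp i j"
      proof -
        have st: "{1..n}-{j}-{i} = {1..n}-{i,j}" by auto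
        show ?thesis unfolding P_def Qp_def st[symmetric] by (rule prod.remove) (use i j in auto)
      qed
      show "P i * P j = Gp * Qp i j" using e1 e2 e3[OF i] by (simp add: mult_ac)
    qed
    show "Pv^2 = H - a * v" unfolding H_def v_def by simp
    show "v = Py^2" by (rule v_def)
    show "\<forall>i\<in>{1..n}. w i ^2 * (al i - a) = - e i"
    proof
      fix i assume i: "i \<in> {1..n}"
      have "\<epsilon> i = 1 \<or> \<epsilon> i = -1" using eps i by blast
      then have "\<epsilon> i * \<epsilon> i = 1" by auto
      moreover have "\<Delta> i a = \<epsilon> i * (a - al i)" using Dd by blast
      then have "\<epsilon> i * \<Delta> i a = (\<epsilon> i * \<epsilon> i) * (a - al i)" by (simp add: mult_ac)
      ultimately have "al i - a = - (\<epsilon> i * \<Delta> i a)" by simp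
      then have "w i ^2 * (al i - a) = \<xi> i ^ 2 / \<Delta> i a * (- (\<epsilon> i * \<Delta> i a))"
        using w2[OF i] by simp
      also have "\<dots> = - e i"
      proof -
        have "\<Delta> i a > 0" using Dpos i by blast
        then show ?thesis by (simp add: e_def)
      qed
      finally show "w i ^2 * (al i - a) = - e i" .
    qed
  qed simp
  have main: "S1^2 - 2 * G * S2 =
       (Acoef al n n)^2 * (\<Sum>k=1..n. \<Sum>l=1..n. QQ k l * H^(2*n - k - l) * Py^(2*(k+l)))"
  proof -
    have "S1^2 - 2 * G * S2 = Q1^2 - 2 * G * Q2"
      unfolding S1_def S2_def by (simp add: algebra_simps power2_eq_square)
    also have "\<dots> = (Pv*Py*(\<Sum>i\<in>{1..n}. w i * P i))^2
     - Gp*(v * (\<Sum>i\<in>{1..n}. w i^2 * P i) + (H * v - a * v^2) * (\<Sum>i\<in>{1..n}. \<Sum>j\<in>{1..n}-{i}. w i * w j * Qp i j))"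
    proof -
      have s1: "(\<Sum>i\<in>{1..n}. w i^2 * P i) = (\<Sum>i=1..n. \<xi> i ^ 2 / \<Delta> i a * P i)"
        by (intro sum.cong refl) (simp add: w2)
      have s2: "(\<Sum>i\<in>{1..n}. \<Sum>j\<in>{1..n}-{i}. w i * w j * Qp i j)
          = (\<Sum>i\<in>{1..n}. \<Sum>j\<in>{1..n} - {i}. \<xi> i * \<xi> j / sqrt (\<Delta> i a * \<Delta> j a) * Qp i j)"
        by (simp add: ww)
      show ?thesis unfolding hQ1 hQ2 hGe s1 s2 by (simp add: power2_eq_square)
    qed
    also have "\<dots> = - (v^2 * (\<Sum>i\<in>{1..n}. e i * P i ^2))" by (rule fa)
    also have "\<dots> = (Acoef al n n)^2 * (\<Sum>k=1..n. \<Sum>l=1..n. QQ k l * H^(2*n - k - l) * Py^(2*(k+l)))"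
      unfolding hA hR by simp
    finally show ?thesis .
  qed
  show ?thesis
    using main
    unfolding Let_def S1_def S2_def Q1_def Q2_def G_def QQ_def bt_def ct_def H_def Pv_def .
qed

end
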